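(* Let $\mathfrak m\in\mathcal O_{\mathbb Z}$ be a set (all multiplicities at most $1$). Then no non-trivial decomposition of $\mathfrak m$ is relevant to the canonical order on $\mathfrak m$. In particular, if $\mathfrak m$ is distinguished then $\mathfrak m$ is of Speh type.
   Context: Segments of integers: $[a,b]=\{a,\dots,b\}$ with integers $a\le b$; $b([a,b])=a$, $e([a,b])=b$, $\nu[a,b]=[a+1,b+1]$; $[a,b]\prec[a',b']$ if $a<a'$, $b<b'$, $b\ge a'-1$. $\mathcal O_{\mathbb Z}$: finite multi-sets of segments (functions to $\mathbb Z_{\ge0}$ with finite support; sums and pointwise minima are taken as functions; $\nu\mathfrak n$ applies $\nu$ to each segment). An ordering $\{\Delta_1,\dots,\Delta_k\}$ is standard if $\Delta_i\not\prec\Delta_j$ for $i<j$. A decomposition of $[a,b]$ is a tuple of nonempty segments $([a_1,b_1],\dots,[a_m,b_m])$ with $b_1=b$, $a_m=a$, $b_{i+1}=a_i-1$; it is trivial if $m=1$. A decomposition of an ordered multi-set $\{\Delta_1,\dots,\Delta_k\}$ is a choice of decomposition $(\Delta_{i,1},\dots,\Delta_{i,k_i})$ of each $\Delta_i$ (trivial if all are trivial); index set $\mathfrak I=\{(i,j)\}$ with lexicographic order $\prec$, and $(i,j)\ll(i',j')$ iff $i<i'$. It is relevant to the ordering if there is an involution $\tau$ of $\mathfrak I$ with: $\tau(i,j+1)\ll\tau(i,j)$ for all $i$, $1\le j<k_i$; $\tau(\iota)\ne\iota$ for all $\iota$; $\Delta_\iota=\nu\Delta_{\tau(\iota)}$ whenever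 $\iota\prec\tau(\iota)$. $\mathfrak m$ is distinguished if every standard ordering admits a relevant decomposition; of Speh type if $\mathfrak m=\mathfrak n+\nu\mathfrak n$ for some $\mathfrak n$. Canonical order: let $c_1>\cdots>c_s$ be the distinct values of $e(\Delta)$, $\Delta\in\mathfrak m$, and $\mathfrak m[i]$ the sub-multi-set of segments ending at $c_i$. List all of $\mathfrak m[1]$, then all of $\mathfrak m[2]$, etc. Order $\mathfrak m[1]$ by nondecreasing beginnings and set $\mathfrak m[1]'=\mathfrak m[1]$. Given $\mathfrak m[i]'$, let $\mathfrak p=\min(\mathfrak m[i+1],\nu^{-1}\mathfrak m[i]')$ and $\mathfrak m[i+1]'=\mathfrak m[i+1]-\mathfrak p$; order $\mathfrak m[i+1]$ as the segments of $\mathfrak m[i+1]'$ in nondecreasing order of beginnings followed by the segments of $\mathfrak p$ in nonincreasing order of beginnings. (This is a standard order.) *)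

theory Defs
  imports Main "HOL-Library.Multiset" "HOL-Library.Product_Lexorder"
begin

text \<open>A segment [a,b] is represented by the pair (a,b) with a \<le> b.\<close>
type_synonym seg = "int \<times> int"

definition is_seg :: "seg \<Rightarrow> bool" where
  "is_seg \<Delta> \<longleftrightarrow> fst \<Delta> \<le> snd \<Delta>"

definition nu :: "seg \<Rightarrow> seg" where
  "nu \<Delta> = (fst \<Delta> + 1, snd \<Delta> + 1)"

definition nu_inv :: "seg \<Rightarrow> seg" where
  "nu_inv \<Delta> = (fst \<Delta> - 1, snd \<Delta> - 1)"

definition seg_prec :: "seg \<Rightarrow> seg \<Rightarrow> bool" where
  "seg_prec \<Delta> \<Delta>' \<longleftrightarrow> fst \<Delta> < fst \<Delta>' \<and> snd \<Delta> < snd \<Delta>' \<and> snd \<Delta> \<ge> fst \<Delta>' - 1"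

definition is_segms :: "seg multiset \<Rightarrow> bool" where
  "is_segms m \<longleftrightarrow> (\<forall>\<Delta>\<in>#m. is_seg \<Delta>)"

definition standard_ordering :: "seg multiset \<Rightarrow> seg list \<Rightarrow> bool" where
  "standard_ordering m xs \<longleftrightarrow> mset xs = m \<and>
     (\<forall>i j. i < j \<and> j < length xs \<longrightarrow> \<not> seg_prec (xs ! i) (xs ! j))"

definition seg_decomp :: "seg \<Rightarrow> seg list \<Rightarrow> bool" where
  "seg_decomp \<Delta> ds \<longleftrightarrow> ds \<noteq> [] \<and> (\<forall>\<delta>\<in>set ds. is_seg \<delta>) \<and>
     snd (hd ds) = snd \<Delta> \<and> fst (last ds) = fst \<Delta> \<and>
     (\<forall>i. Suc i < length ds \<longrightarrow> snd (ds ! Suc i) = fst (ds ! i) - 1)"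

definition decomposition :: "seg list \<Rightarrow> seg list list \<Rightarrow> bool" where
  "decomposition xs dss \<longleftrightarrow> length dss = length xs \<and>
     (\<forall>i < length xs. seg_decomp (xs ! i) (dss ! i))"

definition trivial_decomp :: "seg list list \<Rightarrow> bool" where
  "trivial_decomp dss \<longleftrightarrow> (\<forall>i < length dss. length (dss ! i) = 1)"

text \<open>Index set (0-based) and lexicographic order on it.\<close>
definition index_set :: "seg list list \<Rightarrow> (nat \<times> nat) set" where
  "index_set dss = {(i, j). i < length dss \<and> j < length (dss ! i)}"

definition idx_lex :: "nat \<times> nat \<Rightarrow> nat \<times> nat \<Rightarrow> bool" where
  "idx_lex \<iota> \<iota>' \<longleftrightarrow> fst \<iota> < fst \<iota>' \<or> (fst \<iota> = fst \<iota>' \<and> snd \<iota> < snd \<iota>')"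

definition relevant :: "seg list \<Rightarrow> seg list list \<Rightarrow> bool" where
  "relevant xs dss \<longleftrightarrow> decomposition xs dss \<and>
    (\<exists>\<tau> :: nat \<times> nat \<Rightarrow> nat \<times> nat.
       (\<forall>\<iota>\<in>index_set dss. \<tau> \<iota> \<in> index_set dss \<and> \<tau> (\<tau> \<iota>) = \<iota> \<and> \<tau> \<iota> \<noteq> \<iota>) \<and>
       (\<forall>i j. i < length dss \<and> Suc j < length (dss ! i) \<longrightarrow>
            fst (\<tau> (i, Suc j)) < fst (\<tau> (i, j))) \<and>
       (\<forall>\<iota>\<in>index_set dss. idx_lex \<iota> (\<tau> \<iota>) \<longrightarrow>
            dss ! fst \<iota> ! snd \<iota> = nu (dss ! fst (\<tau> \<iota>) ! snd (\<tau> \<iota>))))"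

definition distinguished :: "seg multiset \<Rightarrow> bool" where
  "distinguished m \<longleftrightarrow> (\<forall>xs. standard_ordering m xs \<longrightarrow> (\<exists>dss. relevant xs dss))"

definition speh_type :: "seg multiset \<Rightarrow> bool" where
  "speh_type m \<longleftrightarrow> (\<exists>n. m = n + image_mset nu n)"

text \<open>Canonical order. prev is m[i]'; the list holds the remaining end values in decreasing order.
  All segments in mc have the same end, so the lexicographic order (Product_Lexorder) sorts them by beginnings.\<close>
fun canon_aux :: "seg multiset \<Rightarrow> int list \<Rightarrow> seg multiset \<Rightarrow> seg list" where
  "canon_aux prev [] m = []"
| "canon_aux prev (c # cs) m =
     (let mc = filter_mset (\<lambda>\<Delta>. snd \<Delta> = c) m;
          p = mc \<inter># image_mset nu_inv prev;
          mc' = mc - p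
      in sorted_list_of_multiset mc' @ rev (sorted_list_of_multiset p) @ canon_aux mc' cs m)"

definition canonical_order :: "seg multiset \<Rightarrow> seg list" where
  "canonical_order m = canon_aux {#} (rev (sorted_list_of_set (snd ` set_mset m))) m"

end

theory Submission imports Defs begin

abbreviation grp :: "seg multiset \<Rightarrow> int \<Rightarrow> seg multiset" where
  "grp m c \<equiv> filter_mset (\<lambda>\<Delta>. snd \<Delta> = c) m"

lemma ca_Cons: "canon_aux prev (c # cs) m =
   sorted_list_of_multiset (grp m c - (grp m c \<inter># image_mset nu_inv prev)) @
   rev (sorted_list_of_multiset (grp m c \<inter># image_mset nu_inv prev)) @
   canon_aux (grp m c - (grp m c \<inter># image_mset nu_inv prev)) cs m"
  by (simp add: Let_def)

declare canon_aux.simps(2)[simp del]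

lemma diff_inter_add: "(A::'a multiset) - B + (A \<inter># B) = A"
  by (rule multiset_eqI) simp

lemma ca_set: "set (canon_aux prev cs m) \<subseteq> {\<Delta>. \<Delta> \<in># m \<and> snd \<Delta> \<in> set cs}"
proof (induction cs arbitrary: prev)
  case Nil then show ?case by simp
next
  case (Cons c cs)
  show ?case unfolding ca_Cons using Cons.IH
    by (auto dest: in_diffD)
qed

lemma ca_mset: "distinct cs \<Longrightarrow> mset (canon_aux prev cs m) = filter_mset (\<lambda>\<Delta>. snd \<Delta> \<in> set cs) m"
proof (induction cs arbitrary: prev)
  case Nil then show ?case by simp
next
  case (Cons c cs)
  let ?p = "grp m c \<inter># image_mset nu_inv prev"
  have sub: "?p \<subseteq># grp m c" by simp
  have "mset (canon_aux prev (c # cs) m) = (grp m c - ?p) + ?p + filter_mset (\<lambda>\<Delta>. snd \<Delta> \<in> set cs) m"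
    unfolding ca_Cons using Cons by simp
  also have "\<dots> = grp m c + filter_mset (\<lambda>\<Delta>. snd \<Delta> \<in> set cs) m"
    using diff_inter_add by simp
  also have "\<dots> = filter_mset (\<lambda>\<Delta>. snd \<Delta> \<in> set (c # cs)) m"
    using Cons.prems by (intro multiset_eqI) auto
  finally show ?case .
qed

lemma ca_sorted: "sorted_wrt (>) cs \<Longrightarrow> sorted_wrt (\<lambda>x y. snd y \<le> snd x) (canon_aux prev cs m)"
proof (induction cs arbitrary: prev)
  case Nil then show ?case by simp
next
  case (Cons c cs)
  let ?p = "grp m c \<inter># image_mset nu_inv prev"
  have blk: "\<forall>x\<in>set (sorted_list_of_multiset (grp m c - ?p) @ rev (sorted_list_of_multiset ?p)). snd x = c"
    by (auto dest: in_diffD)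
  have rest: "\<forall>x\<in>set (canon_aux (grp m c - ?p) cs m). snd x < c"
    using ca_set Cons.prems by fastforce
  have IH: "sorted_wrt (\<lambda>x y. snd y \<le> snd x) (canon_aux (grp m c - ?p) cs m)"
    using Cons by simp
  have same: "sorted_wrt (\<lambda>x y. snd y \<le> snd x) xs" if "\<forall>x\<in>set xs. snd x = c" for xs :: "seg list"
    using that by (induction xs) auto
  have "sorted_wrt (\<lambda>x y. snd y \<le> snd x) ((sorted_list_of_multiset (grp m c - ?p) @ rev (sorted_list_of_multiset ?p)) @ canon_aux (grp m c - ?p) cs m)"
    unfolding sorted_wrt_append[of _ "sorted_list_of_multiset (grp m c - ?p) @ rev (sorted_list_of_multiset ?p)"]
    using same[OF blk] IH blk rest by fastforce
  then show ?case unfolding ca_Cons by simp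
qed

lemma ca_cong: "(\<forall>c\<in>set cs. grp m c = grp m' c) \<Longrightarrow> canon_aux prev cs m = canon_aux prev cs m'"
  by (induction cs arbitrary: prev) (simp_all add: ca_Cons)

lemma ca_empty: assumes "grp m c = {#}" shows " canon_aux prev (c # cs) m = canon_aux {#} cs m"
  apply (subst ca_Cons) apply (subst assms)+ by simp

lemma ca_noprev: assumes "\<forall>\<Delta>\<in>#prev. snd \<Delta> \<noteq> c + 1"
  shows "canon_aux prev (c # cs) m = canon_aux {#} (c # cs) m"
proof -
  have "grp m c \<inter># image_mset nu_inv prev = {#}"
  proof (rule multiset_eqI)
    fix x
    show "count (grp m c \<inter># image_mset nu_inv prev) x = count {#} x"
    proof (cases "snd x = c")
      case True
      then have "x \<notin># image_mset nu_inv prev" using assms by (auto simp: nu_inv_def)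
      then have "count (image_mset nu_inv prev) x = 0" by (metis count_eq_zero_iff)
      then show ?thesis by simp
    next
      case False then show ?thesis by simp
    qed
  qed
  then show ?thesis by (simp add: ca_Cons)
qed

lemma ca_filter: "sorted_wrt (>) cs \<Longrightarrow> (\<forall>\<Delta>\<in>#prev. \<forall>d\<in>set cs. d < snd \<Delta>) \<Longrightarrow>
  canon_aux prev cs m = canon_aux prev (filter (\<lambda>d. grp m d \<noteq> {#}) cs) m"
proof (induction cs arbitrary: prev)
  case Nil then show ?case by simp
next
  case (Cons d cs)
  show ?case
  proof (cases "grp m d = {#}")
    case True
    have "canon_aux prev (d # cs) m = canon_aux {#} cs m" using True by (rule ca_empty)
    also have "\<dots> = canon_aux {#} (filter (\<lambda>d. grp m d \<noteq> {#}) cs) m"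
      using Cons by simp
    also have "\<dots> = canon_aux prev (filter (\<lambda>d. grp m d \<noteq> {#}) cs) m"
    proof -
      { fix d' cs' assume fc: "filter (\<lambda>d. grp m d \<noteq> {#}) cs = d' # cs'"
        then have "d' \<in> set (filter (\<lambda>d. grp m d \<noteq> {#}) cs)" by simp
        then have "d' \<in> set cs" by simp
        then have "d' < d" using Cons.prems(1) by simp
        then have "\<forall>\<Delta>\<in>#prev. snd \<Delta> \<noteq> d' + 1" using Cons.prems(2) by fastforce
        then have ?thesis using fc ca_noprev by metis }
      then show ?thesis by (cases "filter (\<lambda>d. grp m d \<noteq> {#}) cs") simp_all
    qed
    finally show ?thesis using True by (simp only: filter.simps True simp_thms if_False)
  next
    case False
    let ?p = "grp m d \<inter># image_mset nu_inv prev"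
    have "\<forall>\<Delta>\<in>#grp m d - ?p. \<forall>d'\<in>set cs. d' < snd \<Delta>"
      using Cons.prems(1) by (auto dest: in_diffD)
    then have "canon_aux (grp m d - ?p) cs m = canon_aux (grp m d - ?p) (filter (\<lambda>d. grp m d \<noteq> {#}) cs) m"
      using Cons by simp
    then show ?thesis using False by (simp add: ca_Cons)
  qed
qed

lemma canon_any:
  assumes "sorted_wrt (>) cs" "snd ` set_mset m \<subseteq> set cs"
  shows "canonical_order m = canon_aux {#} cs m"
proof -
  have "canon_aux {#} cs m = canon_aux {#} (filter (\<lambda>d. grp m d \<noteq> {#}) cs) m"
    using ca_filter assms(1) by simp
  moreover have "filter (\<lambda>d. grp m d \<noteq> {#}) cs = rev (sorted_list_of_set (snd ` set_mset m))"
  proof -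
    have "rev (filter (\<lambda>d. grp m d \<noteq> {#}) cs) = sorted_list_of_set (snd ` set_mset m)"
    proof (rule sorted_distinct_set_unique)
      have "sorted_wrt (>) (filter (\<lambda>d. grp m d \<noteq> {#}) cs)"
        using assms(1) sorted_wrt_filter by blast
      then have "sorted_wrt (<) (rev (filter (\<lambda>d. grp m d \<noteq> {#}) cs))"
        by (simp add: sorted_wrt_rev)
      then show "sorted (rev (filter (\<lambda>d. grp m d \<noteq> {#}) cs))"
        "distinct (rev (filter (\<lambda>d. grp m d \<noteq> {#}) cs))"
        by (auto simp: strict_sorted_iff)
      show "set (rev (filter (\<lambda>d. grp m d \<noteq> {#}) cs)) = set (sorted_list_of_set (snd ` set_mset m))"
        using assms(2) by (force simp: image_iff)
    qed simp_all
    then show ?thesis by (metis rev_rev_ident)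
  qed
  ultimately show ?thesis unfolding canonical_order_def by simp
qed

lemma inter_minus_same: "x \<in># A \<Longrightarrow> x \<in># B \<Longrightarrow> (A - {#x#}) \<inter># (B - {#x#}) = (A \<inter># B) - {#x#}"
  by (rule multiset_eqI) (auto simp: count_eq_zero_iff[symmetric])

lemma diff_diff_same: "x \<in># p \<Longrightarrow> p \<subseteq># M \<Longrightarrow> (M - {#x#}) - (p - {#x#}) = M - p"
  by (rule multiset_eqI) (auto simp: count_eq_zero_iff[symmetric] subseteq_mset_def) 

lemma canon_struct:
  assumes "m \<noteq> {#}"
  obtains \<Delta>0 rest where "canonical_order m = \<Delta>0 # rest" "\<Delta>0 \<in># m"
    "\<forall>\<Delta>\<in>#m. snd \<Delta> \<le> snd \<Delta>0" "\<forall>\<Delta>\<in>#m. snd \<Delta> = snd \<Delta>0 \<longrightarrow> fst \<Delta>0 \<le> fst \<Delta>"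
    "nu_inv \<Delta>0 \<in># m \<Longrightarrow> \<exists>A T. canonical_order m = \<Delta>0 # A @ nu_inv \<Delta>0 # T \<and>
        canonical_order (m - {#\<Delta>0, nu_inv \<Delta>0#}) = A @ T \<and> (\<forall>\<Delta>\<in>set T. snd \<Delta> < snd \<Delta>0 - 1)"
proof -
  define E where "E = snd ` set_mset m"
  have finE: "finite E" and neE: "E \<noteq> {}" using assms unfolding E_def by auto
  define c where "c = Max E"
  have cE: "c \<in> E" using finE neE c_def by simp
  have leC: "\<forall>\<Delta>\<in>#m. snd \<Delta> \<le> c" using finE c_def E_def by auto
  define T where "T = rev (sorted_list_of_set {d \<in> E. d < c - 1})"
  have Tset: "set T = {d \<in> E. d < c - 1}" using finE by (simp add: T_def)
  have Tsort: "sorted_wrt (>) T"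
    unfolding T_def sorted_wrt_rev using sorted_list_of_set(3)[of "{d \<in> E. d < c - 1}"]
    by (simp add: strict_sorted_iff)
  define cs where "cs = c # (c - 1) # T"
  have cs_sort: "sorted_wrt (>) cs" unfolding cs_def using Tsort Tset by auto
  have cs_cov: "E \<subseteq> set cs"
  proof
    fix d assume "d \<in> E"
    then have "d \<le> c" using finE c_def by simp
    then have "d = c \<or> d = c - 1 \<or> d < c - 1" by linarith
    moreover have "d < c - 1 \<Longrightarrow> d \<in> set T" using \<open>d \<in> E\<close> Tset by simp
    ultimately show "d \<in> set cs" unfolding cs_def by (metis list.set_intros(1) list.set_intros(2))
  qed
  define M1 where "M1 = grp m c"
  define M2 where "M2 = grp m (c - 1)"
  define p where "p = M2 \<inter># image_mset nu_inv M1"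
  have co: "canonical_order m = sorted_list_of_multiset M1 @ sorted_list_of_multiset (M2 - p)
      @ rev (sorted_list_of_multiset p) @ canon_aux (M2 - p) T m"
    using canon_any[OF cs_sort] cs_cov unfolding E_def
    by (simp only: cs_def ca_Cons M1_def M2_def p_def) simp
  define L where "L = sorted_list_of_multiset M1"
  have "M1 \<noteq> {#}" using cE unfolding M1_def E_def by auto
  then have Lne: "L \<noteq> []" unfolding L_def by (metis mset_sorted_list_of_multiset mset_zero_iff)
  define \<Delta>0 where "\<Delta>0 = hd L"
  have LC: "L = \<Delta>0 # tl L" using Lne \<Delta>0_def by simp
  have Lsort: "sorted L" unfolding L_def by simp
  have D0M1: "\<Delta>0 \<in># M1" using Lne unfolding \<Delta>0_def L_def by (metis hd_in_set set_sorted_list_of_multiset)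
  have D0m: "\<Delta>0 \<in># m" and sD0: "snd \<Delta>0 = c" using D0M1 unfolding M1_def by auto
  have minM1: "\<forall>y\<in>#M1. \<Delta>0 \<le> y"
  proof
    fix y assume "y \<in># M1"
    then have "y \<in> set L" unfolding L_def by simp
    then show "\<Delta>0 \<le> y" using Lsort LC by (metis set_ConsD sorted_simps(2) order_refl)
  qed
  have minfst: "\<forall>\<Delta>\<in>#m. snd \<Delta> = snd \<Delta>0 \<longrightarrow> fst \<Delta>0 \<le> fst \<Delta>"
  proof (intro ballI impI)
    fix \<Delta> assume "\<Delta> \<in># m" "snd \<Delta> = snd \<Delta>0"
    then have "\<Delta> \<in># M1" unfolding M1_def using sD0 by simp
    then have "\<Delta>0 \<le> \<Delta>" using minM1 by blast
    then show "fst \<Delta>0 \<le> fst \<Delta>" by (cases \<Delta>0; cases \<Delta>) auto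
  qed
  have rm: "\<exists>A T. canonical_order m = \<Delta>0 # A @ nu_inv \<Delta>0 # T \<and>
        canonical_order (m - {#\<Delta>0, nu_inv \<Delta>0#}) = A @ T \<and> (\<forall>\<Delta>\<in>set T. snd \<Delta> < snd \<Delta>0 - 1)"
    if Dsm: "nu_inv \<Delta>0 \<in># m"
  proof -
    define Ds where "Ds = nu_inv \<Delta>0"
    have sDs: "snd Ds = c - 1" using sD0 by (simp add: Ds_def nu_inv_def)
    have DsM2: "Ds \<in># M2" using Dsm sDs unfolding M2_def Ds_def by simp
    have DsI: "Ds \<in># image_mset nu_inv M1" using D0M1 unfolding Ds_def by simp
    have Dsp: "Ds \<in># p" using DsM2 DsI unfolding p_def by simp
    have minp: "\<forall>x\<in>set (sorted_list_of_multiset (p - {#Ds#})). Ds \<le> x"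
    proof
      fix x assume "x \<in> set (sorted_list_of_multiset (p - {#Ds#}))"
      then have "x \<in># p" by (auto dest: in_diffD)
      then have "x \<in># M2" "x \<in># image_mset nu_inv M1" unfolding p_def by auto
      then obtain y where y: "y \<in># M1" "x = nu_inv y" by auto
      have "\<Delta>0 \<le> y" using minM1 y by blast
      moreover have "snd y = c" using y unfolding M1_def by simp
      ultimately show "Ds \<le> x" using y sD0 unfolding Ds_def nu_inv_def
        by (cases \<Delta>0; cases y) auto
    qed
    have sp: "sorted_list_of_multiset p = Ds # sorted_list_of_multiset (p - {#Ds#})"
    proof -
      have "p = add_mset Ds (p - {#Ds#})" using Dsp by simp
      then have "sorted_list_of_multiset p = insort Ds (sorted_list_of_multiset (p - {#Ds#}))"
        by (metis sorted_list_of_multiset_insert)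
      also have "\<dots> = Ds # sorted_list_of_multiset (p - {#Ds#})"
        using minp by (simp add: insort_is_Cons)
      finally show ?thesis .
    qed
    define A where "A = tl L @ sorted_list_of_multiset (M2 - p) @ rev (sorted_list_of_multiset (p - {#Ds#}))"
    define Tl where "Tl = canon_aux (M2 - p) T m"
    have e1: "canonical_order m = \<Delta>0 # A @ Ds # Tl"
      using co LC sp unfolding A_def Tl_def L_def by (metis append.assoc append_Cons append_Nil rev.simps(2))
    define m2 where "m2 = m - {#\<Delta>0, Ds#}"
    have E2: "snd ` set_mset m2 \<subseteq> set cs" using cs_cov unfolding m2_def E_def by (auto dest: in_diffD)
    define N1 where "N1 = grp m2 c"
    define N2 where "N2 = grp m2 (c - 1)"
    define p2 where "p2 = N2 \<inter># image_mset nu_inv N1"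
    have co2: "canonical_order m2 = sorted_list_of_multiset N1 @ sorted_list_of_multiset (N2 - p2)
      @ rev (sorted_list_of_multiset p2) @ canon_aux (N2 - p2) T m2"
      using canon_any[OF cs_sort E2]
      by (simp only: cs_def ca_Cons N1_def N2_def p2_def) simp
    have N1e: "N1 = M1 - {#\<Delta>0#}" unfolding N1_def M1_def m2_def using sD0 sDs by simp
    have N2e: "N2 = M2 - {#Ds#}" unfolding N2_def M2_def m2_def using sD0 sDs by simp
    have sub1: "{#\<Delta>0#} \<subseteq># M1" using D0M1 by simp
    have imN1: "image_mset nu_inv N1 = image_mset nu_inv M1 - {#Ds#}"
    proof -
      have "image_mset nu_inv (M1 - {#\<Delta>0#}) = image_mset nu_inv M1 - image_mset nu_inv {#\<Delta>0#}"
        by (rule image_mset_Diff[OF sub1])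
      then show ?thesis unfolding N1e Ds_def by (simp only: image_mset_single)
    qed
    have p2e: "p2 = p - {#Ds#}" unfolding p2_def p_def N2e imN1 by (rule inter_minus_same[OF DsM2 DsI])
    have psub: "p \<subseteq># M2" unfolding p_def by simp
    have dd: "N2 - p2 = M2 - p" unfolding N2e p2e using diff_diff_same[OF Dsp psub] .
    have sN1: "sorted_list_of_multiset N1 = tl L"
    proof -
      have "mset L = M1" unfolding L_def by simp
      then have "mset (tl L) = N1" unfolding N1e using LC by (metis add_mset_remove_trivial mset.simps(2))
      then show ?thesis using Lsort LC by (metis sorted_list_of_multiset_mset sorted_simps(2) sorted_sort_id)
    qed
    have tl2: "canon_aux (M2 - p) T m2 = Tl"
      unfolding Tl_def
    proof (rule ca_cong, intro ballI)
      fix d assume "d \<in> set T"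
      then have "d < c - 1" using Tset by simp
      then show "grp m2 d = grp m d" unfolding m2_def using sD0 sDs by simp
    qed
    have e2: "canonical_order m2 = A @ Tl"
      using co2 unfolding sN1 dd unfolding p2e tl2 A_def by simp
    have e3: "\<forall>\<Delta>\<in>set Tl. snd \<Delta> < snd \<Delta>0 - 1"
      using ca_set[of "M2 - p" T m] Tset sD0 unfolding Tl_def by auto
    show ?thesis using e1 e2 e3 unfolding m2_def Ds_def by blast
  qed
  have ce: "canonical_order m = \<Delta>0 # (tl L @ sorted_list_of_multiset (M2 - p) @ rev (sorted_list_of_multiset p) @ canon_aux (M2 - p) T m)"
    using co LC unfolding L_def[symmetric] by (metis append_Cons)
  have leC': "\<forall>\<Delta>\<in>#m. snd \<Delta> \<le> snd \<Delta>0" using leC sD0 by simp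
  show ?thesis by (rule that[OF ce D0m leC' minfst rm])
qed

lemma canon_basic: "mset (canonical_order m) = m \<and> sorted_wrt (\<lambda>x y. snd y \<le> snd x) (canonical_order m)"
proof -
  define E where "E = snd ` set_mset m"
  have fin: "finite E" unfolding E_def by simp
  define cs where "cs = rev (sorted_list_of_set E)"
  have "sorted_wrt (<) (sorted_list_of_set E)" using sorted_list_of_set[of E] fin by (simp add: strict_sorted_iff)
  then have srt: "sorted_wrt (>) cs" unfolding cs_def by (simp add: sorted_wrt_rev)
  have st: "set cs = E" unfolding cs_def using fin by simp
  have dcs: "distinct cs" unfolding cs_def by simp
  have co: "canonical_order m = canon_aux {#} cs m" unfolding canonical_order_def cs_def E_def ..
  have "mset (canonical_order m) = m" unfolding co ca_mset[OF dcs] st E_def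
    by (rule multiset_eqI) (auto simp: count_eq_zero_iff[symmetric])
  moreover have "sorted_wrt (\<lambda>x y. snd y \<le> snd x) (canonical_order m)" unfolding co by (rule ca_sorted[OF srt])
  ultimately show ?thesis by blast
qed

lemma sd_hd: "seg_decomp \<Delta> ds \<Longrightarrow> snd (ds ! 0) = snd \<Delta>"
  unfolding seg_decomp_def by (metis hd_conv_nth)

lemma sd_last: "seg_decomp \<Delta> ds \<Longrightarrow> fst (ds ! (length ds - 1)) = fst \<Delta>"
  unfolding seg_decomp_def by (metis last_conv_nth)

lemma sd_ends: assumes "seg_decomp \<Delta> ds" shows "j < length ds \<Longrightarrow> snd (ds ! j) \<le> snd \<Delta> \<and> (0 < j \<longrightarrow> snd (ds ! j) < snd \<Delta>)"
proof (induction j)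
  case 0 then show ?case using sd_hd[OF assms] by simp
next
  case (Suc j)
  have "snd (ds ! Suc j) = fst (ds ! j) - 1" using assms Suc.prems unfolding seg_decomp_def by blast
  moreover have "is_seg (ds ! j)" using assms Suc.prems unfolding seg_decomp_def by simp
  ultimately show ?case using Suc by (simp add: is_seg_def)
qed

lemma sd_fst: assumes "seg_decomp \<Delta> ds" shows "j < length ds \<Longrightarrow> fst \<Delta> \<le> fst (ds ! j)"
proof (induction "length ds - 1 - j" arbitrary: j)
  case 0
  then have "j = length ds - 1" by simp
  then show ?case using sd_last[OF assms] by simp
next
  case (Suc k)
  then have j1: "Suc j < length ds" by simp
  have "fst \<Delta> \<le> fst (ds ! Suc j)" using Suc.hyps(1)[of "Suc j"] Suc.hyps(2) j1 by simp
  moreover have "snd (ds ! Suc j) = fst (ds ! j) - 1" using assms j1 unfolding seg_decomp_def by blast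
  moreover have "is_seg (ds ! Suc j)" using assms j1 unfolding seg_decomp_def by simp
  ultimately show ?case by (simp add: is_seg_def)
qed

definition rtau :: "seg list list \<Rightarrow> (nat \<times> nat \<Rightarrow> nat \<times> nat) \<Rightarrow> bool" where
  "rtau dss \<tau> \<longleftrightarrow>
       (\<forall>\<iota>\<in>index_set dss. \<tau> \<iota> \<in> index_set dss \<and> \<tau> (\<tau> \<iota>) = \<iota> \<and> \<tau> \<iota> \<noteq> \<iota>) \<and>
       (\<forall>i j. i < length dss \<and> Suc j < length (dss ! i) \<longrightarrow>
            fst (\<tau> (i, Suc j)) < fst (\<tau> (i, j))) \<and>
       (\<forall>\<iota>\<in>index_set dss. idx_lex \<iota> (\<tau> \<iota>) \<longrightarrow>
            dss ! fst \<iota> ! snd \<iota> = nu (dss ! fst (\<tau> \<iota>) ! snd (\<tau> \<iota>)))"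

lemma relevant_iff: "relevant xs dss \<longleftrightarrow> decomposition xs dss \<and> (\<exists>\<tau>. rtau dss \<tau>)"
  unfolding relevant_def rtau_def ..

lemma rtau_dec: assumes "rtau dss \<tau>" "i < length dss" "j' < length (dss ! i)"
  shows "j < j' \<Longrightarrow> fst (\<tau> (i, j')) < fst (\<tau> (i, j))"
  using assms(3)
proof (induction j' )
  case 0 then show ?case by simp
next
  case (Suc j')
  have "fst (\<tau> (i, Suc j')) < fst (\<tau> (i, j'))" using assms(1,2) Suc.prems(2) unfolding rtau_def by blast
  then show ?case using Suc by (cases "j = j'") auto
qed

lemma rtau_diffrow: assumes "rtau dss \<tau>" "(i, j) \<in> index_set dss"
  shows "fst (\<tau> (i, j)) \<noteq> i"
proof
  assume a: "fst (\<tau> (i, j)) = i"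
  obtain j' where tj: "\<tau> (i, j) = (i, j')" using a by (metis prod.collapse)
  have mem: "(i, j') \<in> index_set dss" "\<tau> (i, j') = (i, j)" "j' \<noteq> j"
    using assms tj unfolding rtau_def by (metis, metis, force)
  have il: "i < length dss" "j < length (dss ! i)" "j' < length (dss ! i)"
    using assms(2) mem(1) unfolding index_set_def by auto
  show False
  proof (cases "j < j'")
    case True
    then show False using rtau_dec[OF assms(1) il(1) il(3) True] tj mem by simp
  next
    case False
    then have "j' < j" using mem(3) by simp
    then show False using rtau_dec[OF assms(1) il(1) il(2), of j'] tj mem by simp
  qed
qed

lemma restrict:
  assumes dec: "decomposition (x0 # A @ x1 # T) dss" and rt: "rtau dss \<tau>"
    and l0: "length (dss ! 0) = 1" and ls: "length (dss ! Suc (length A)) = 1"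
    and t0: "\<tau> (0, 0) = (Suc (length A), 0)"
  shows "\<exists>dss2. relevant (A @ T) dss2 \<and> (trivial_decomp dss2 \<longrightarrow> trivial_decomp dss)"
proof -
  define xs where "xs = x0 # A @ x1 # T"
  define s where "s = Suc (length A)"
  define n where "n = length dss"
  have nlen: "n = length A + length T + 2" using dec unfolding decomposition_def n_def by simp
  define g where "g = (\<lambda>i. if i < length A then Suc i else i + 2)"
  define h where "h = (\<lambda>r::nat. if r \<le> length A then r - 1 else r - 2)"
  define dss2 where "dss2 = map (\<lambda>i. dss ! g i) [0..<n-2]"
  define \<tau>2 where "\<tau>2 = (\<lambda>(i, j). (h (fst (\<tau> (g i, j))), snd (\<tau> (g i, j))))"
  have len2: "length dss2 = n - 2" unfolding dss2_def by simp
  have d2: "i < n - 2 \<Longrightarrow> dss2 ! i = dss ! g i" for i unfolding dss2_def by simp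
  have gl: "i < n - 2 \<Longrightarrow> g i < n" for i unfolding g_def by auto
  have gns: "g i \<noteq> 0" "g i \<noteq> s" for i unfolding g_def s_def by auto
  have hg: "h (g i) = i" for i unfolding g_def h_def by auto
  have gh: "r \<noteq> 0 \<Longrightarrow> r \<noteq> s \<Longrightarrow> g (h r) = r" for r unfolding g_def h_def s_def by auto
  have hl: "r < n \<Longrightarrow> r \<noteq> 0 \<Longrightarrow> r \<noteq> s \<Longrightarrow> h r < n - 2" for r unfolding h_def s_def using nlen by auto
  have hmono: "r1 \<noteq> 0 \<Longrightarrow> r1 \<noteq> s \<Longrightarrow> r2 \<noteq> 0 \<Longrightarrow> r2 \<noteq> s \<Longrightarrow> r1 < r2 \<longleftrightarrow> h r1 < h r2" for r1 r2
    unfolding h_def s_def by auto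
  have gmono: "i1 < i2 \<longleftrightarrow> g i1 < g i2" for i1 i2 unfolding g_def by auto
  have xs2: "i < n - 2 \<Longrightarrow> (A @ T) ! i = xs ! g i" for i
    unfolding xs_def g_def using nlen by (auto simp: nth_append nth_Cons')
  have ix: "(i, j) \<in> index_set dss2 \<longleftrightarrow> i < n - 2 \<and> (g i, j) \<in> index_set dss" for i j
    unfolding index_set_def using len2 d2 gl n_def by auto
  have s0: "(0, 0) \<in> index_set dss" using l0 nlen unfolding index_set_def n_def by simp
  have ts: "\<tau> (s, 0) = (0, 0)" using rt s0 t0 unfolding rtau_def s_def by metis
  have good: "\<tau> (g i, j) \<in> index_set dss \<and> fst (\<tau> (g i, j)) \<noteq> 0 \<and> fst (\<tau> (g i, j)) \<noteq> s
      \<and> \<tau> (\<tau> (g i, j)) = (g i, j) \<and> \<tau> (g i, j) \<noteq> (g i, j)"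
    if "(g i, j) \<in> index_set dss" for i j
  proof -
    have a: "\<tau> (g i, j) \<in> index_set dss" "\<tau> (\<tau> (g i, j)) = (g i, j)" "\<tau> (g i, j) \<noteq> (g i, j)"
      using rt that unfolding rtau_def by blast+
    obtain r j' where rj: "\<tau> (g i, j) = (r, j')" by (metis prod.collapse)
    have "r \<noteq> 0"
    proof
      assume "r = 0"
      then have "j' < 1" using a(1) rj l0 unfolding index_set_def by simp
      then have "\<tau> (g i, j) = (0, 0)" using rj \<open>r = 0\<close> by simp
      then have "(g i, j) = (s, 0)" using a(2) t0 s_def by simp
      then show False using gns by simp
    qed
    moreover have "r \<noteq> s"
    proof
      assume "r = s"
      then have "j' < 1" using a(1) rj ls unfolding index_set_def s_def by simp
      then have "\<tau> (g i, j) = (s, 0)" using rj \<open>r = s\<close> by simp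
      then have "(g i, j) = (0, 0)" using a(2) ts by simp
      then show False using gns by simp
    qed
    ultimately show ?thesis using a rj by simp
  qed
  have rel2: "rtau dss2 \<tau>2"
    unfolding rtau_def
  proof (intro conjI ballI allI impI)
    fix \<iota> assume "\<iota> \<in> index_set dss2"
    then obtain i j where ij: "\<iota> = (i, j)" "i < n - 2" "(g i, j) \<in> index_set dss" using ix by (metis prod.collapse)
    obtain r j' where rj: "\<tau> (g i, j) = (r, j')" by (metis prod.collapse)
    have G: "(r, j') \<in> index_set dss" "r \<noteq> 0" "r \<noteq> s" "\<tau> (r, j') = (g i, j)" "(r, j') \<noteq> (g i, j)"
      using good[OF ij(3)] rj by auto
    have t2: "\<tau>2 \<iota> = (h r, j')" using rj by (simp add: \<tau>2_def ij)
    have rn: "r < n" using G(1) unfolding index_set_def n_def by simp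
    show "\<tau>2 \<iota> \<in> index_set dss2" unfolding t2 ix using gh[OF G(2,3)] hl[OF rn G(2,3)] G(1) by simp
    show "\<tau>2 (\<tau>2 \<iota>) = \<iota>" unfolding t2 unfolding \<tau>2_def using gh[OF G(2,3)] G(4) hg ij by simp
    show "\<tau>2 \<iota> \<noteq> \<iota>"
    proof
      assume "\<tau>2 \<iota> = \<iota>"
      then have "(h r, j') = (i, j)" using t2 ij(1) by simp
      then have "r = g i" "j' = j" using gh[OF G(2,3)] by auto
      with G(5) show False by simp
    qed
  next
    fix i j assume a: "i < length dss2 \<and> Suc j < length (dss2 ! i)"
    then have i2: "i < n - 2" using len2 by simp
    have b: "g i < length dss \<and> Suc j < length (dss ! g i)" using a i2 d2 gl n_def by simp
    have lt: "fst (\<tau> (g i, Suc j)) < fst (\<tau> (g i, j))" using rt b unfolding rtau_def by blast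
    have "(g i, Suc j) \<in> index_set dss" "(g i, j) \<in> index_set dss" using b unfolding index_set_def by auto
    then have "fst (\<tau> (g i, Suc j)) \<noteq> 0" "fst (\<tau> (g i, Suc j)) \<noteq> s"
      "fst (\<tau> (g i, j)) \<noteq> 0" "fst (\<tau> (g i, j)) \<noteq> s" using good by blast+
    then have "h (fst (\<tau> (g i, Suc j))) < h (fst (\<tau> (g i, j)))" using hmono lt by blast
    then show "fst (\<tau>2 (i, Suc j)) < fst (\<tau>2 (i, j))" unfolding \<tau>2_def by simp
  next
    fix \<iota> assume "\<iota> \<in> index_set dss2" and lex: "idx_lex \<iota> (\<tau>2 \<iota>)"
    then obtain i j where ij: "\<iota> = (i, j)" "i < n - 2" "(g i, j) \<in> index_set dss" using ix by (metis prod.collapse)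
    obtain r j' where rj: "\<tau> (g i, j) = (r, j')" by (metis prod.collapse)
    have G: "(r, j') \<in> index_set dss" "r \<noteq> 0" "r \<noteq> s"
      using good[OF ij(3)] rj by auto
    have t2: "\<tau>2 \<iota> = (h r, j')" using rj by (simp add: \<tau>2_def ij)
    have rn: "r < n" using G(1) unfolding index_set_def n_def by simp
    have "idx_lex (i, j) (h r, j')" using lex t2 ij by simp
    then have "idx_lex (g i, j) (r, j')" unfolding idx_lex_def
      using gmono[of i "h r"] gh[OF G(2,3)] hg[of i] by (metis fst_conv snd_conv)
    then have "dss ! g i ! j = nu (dss ! r ! j')" using rt ij(3) rj unfolding rtau_def by fastforce
    then show "dss2 ! fst \<iota> ! snd \<iota> = nu (dss2 ! fst (\<tau>2 \<iota>) ! snd (\<tau>2 \<iota>))"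
      using t2 ij(1) d2 ij(2) hl[OF rn G(2,3)] gh[OF G(2,3)] by simp
  qed
  have dec2: "decomposition (A @ T) dss2"
    unfolding decomposition_def
  proof (intro conjI allI impI)
    show "length dss2 = length (A @ T)" using len2 nlen by simp
    fix i assume "i < length (A @ T)"
    then have i2: "i < n - 2" using nlen by simp
    have "seg_decomp (xs ! g i) (dss ! g i)" using dec gl[OF i2] unfolding decomposition_def xs_def n_def by simp
    then show "seg_decomp ((A @ T) ! i) (dss2 ! i)" using xs2[OF i2] d2[OF i2] by simp
  qed
  have triv: "trivial_decomp dss" if tr: "trivial_decomp dss2"
    unfolding trivial_decomp_def
  proof (intro allI impI)
    fix i assume i: "i < length dss"
    show "length (dss ! i) = 1"
    proof (cases "i = 0 \<or> i = s")
      case True then show ?thesis using l0 ls s_def by auto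
    next
      case False
      then have "h i < n - 2" "g (h i) = i" using hl gh i n_def by auto
      moreover have "length (dss2 ! h i) = 1" using tr len2 \<open>h i < n - 2\<close> unfolding trivial_decomp_def by simp
      ultimately show ?thesis using d2 by metis
    qed
  qed
  have "relevant (A @ T) dss2" unfolding relevant_iff using dec2 rel2 by (intro conjI exI[of "rtau dss2" \<tau>2])
  then show ?thesis using triv by (intro exI[of _ dss2]) simp
qed

lemma main_lemma: "\<forall>\<Delta>. count m \<Delta> \<le> 1 \<Longrightarrow> relevant (canonical_order m) dss \<Longrightarrow> trivial_decomp dss \<and> speh_type m"
proof (induction "size m" arbitrary: m dss rule: less_induct)
  case less
  show ?case
  proof (cases "m = {#}")
    case True
    then have co: "canonical_order m = []" unfolding canonical_order_def by simp
    then have "dss = []" using less.prems(2) unfolding relevant_def decomposition_def by simp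
    moreover have "speh_type m" unfolding speh_type_def using True by (intro exI[of _ "{#}"]) simp
    ultimately show ?thesis unfolding trivial_decomp_def by simp
  next
    case False
    obtain \<Delta>0 rest where co: "canonical_order m = \<Delta>0 # rest" and D0m: "\<Delta>0 \<in># m"
      and leall: "\<forall>\<Delta>\<in>#m. snd \<Delta> \<le> snd \<Delta>0" and minfst: "\<forall>\<Delta>\<in>#m. snd \<Delta> = snd \<Delta>0 \<longrightarrow> fst \<Delta>0 \<le> fst \<Delta>"
      and rm: "nu_inv \<Delta>0 \<in># m \<Longrightarrow> \<exists>A T. canonical_order m = \<Delta>0 # A @ nu_inv \<Delta>0 # T \<and>
        canonical_order (m - {#\<Delta>0, nu_inv \<Delta>0#}) = A @ T \<and> (\<forall>\<Delta>\<in>set T. snd \<Delta> < snd \<Delta>0 - 1)"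
      using canon_struct[OF False] by blast
    define xs where "xs = canonical_order m"
    have msx: "mset xs = m" and srt: "sorted_wrt (\<lambda>x y. snd y \<le> snd x) xs"
      using canon_basic unfolding xs_def by auto
    have setx: "set xs = set_mset m" using msx by auto
    have dist: "distinct xs" unfolding distinct_count_atmost_1
    proof
      fix \<Delta>
      have "count (mset xs) \<Delta> \<le> 1" using less.prems(1)[rule_format, of \<Delta>] msx by simp
      note le = this
      show "count (mset xs) \<Delta> = (if \<Delta> \<in> set xs then 1 else 0)"
      proof (cases "\<Delta> \<in> set xs")
        case True
        have "0 < count (mset xs) \<Delta>" using True by (rule count_mset_gt_0)
        with le have "count (mset xs) \<Delta> = 1" by linarith
        then show ?thesis using True by simp
      qed simp
    qed
    obtain \<tau> where rt: "rtau dss \<tau>" and dec: "decomposition xs dss"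
      using less.prems(2) unfolding relevant_iff xs_def by blast
    define n where "n = length xs"
    have ln: "length dss = n" using dec unfolding decomposition_def n_def by simp
    have sdi: "i < n \<Longrightarrow> seg_decomp (xs ! i) (dss ! i)" for i using dec unfolding decomposition_def n_def by simp
    have x0: "xs ! 0 = \<Delta>0" "0 < n" using co unfolding xs_def n_def by auto
    define a where "a = fst \<Delta>0"
    define c where "c = snd \<Delta>0"
    define k where "k = length (dss ! 0)"
    have kpos: "0 < k" using sdi[OF x0(2)] unfolding seg_decomp_def k_def by simp
    have row0: "fst (\<tau> (0, j)) \<noteq> 0 \<and> \<tau> (0, j) \<in> index_set dss \<and> \<tau> (\<tau> (0, j)) = (0, j) \<and>
        dss ! 0 ! j = nu (dss ! fst (\<tau> (0, j)) ! snd (\<tau> (0, j)))" if "j < k" for j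
    proof -
      have I: "(0, j) \<in> index_set dss" using that x0 ln unfolding index_set_def k_def by simp
      have ne: "fst (\<tau> (0, j)) \<noteq> 0" using rtau_diffrow[OF rt I] .
      have "\<tau> (0, j) \<in> index_set dss" "\<tau> (\<tau> (0, j)) = (0, j)" using rt I unfolding rtau_def by blast+
      moreover have "idx_lex (0, j) (\<tau> (0, j))" using ne unfolding idx_lex_def by simp
      then have "dss ! 0 ! j = nu (dss ! fst (\<tau> (0, j)) ! snd (\<tau> (0, j)))"
        using rt I unfolding rtau_def by fastforce
      ultimately show ?thesis using ne by blast
    qed
    define kb where "kb = k - 1"
    have kbk: "kb < k" using kpos kb_def by simp
    obtain s js where tb: "\<tau> (0, kb) = (s, js)" by (metis prod.collapse)
    have sI: "s < n" "js < length (dss ! s)" "s \<noteq> 0" "\<tau> (s, js) = (0, kb)"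
      and pb: "dss ! 0 ! kb = nu (dss ! s ! js)"
      using row0[OF kbk] tb ln unfolding index_set_def by auto
    have jsl: "js = length (dss ! s) - 1"
    proof (rule ccontr)
      assume "js \<noteq> length (dss ! s) - 1"
      then have "Suc js < length (dss ! s)" using sI(2) by simp
      then have "fst (\<tau> (s, Suc js)) < fst (\<tau> (s, js))" using rt sI(1) ln unfolding rtau_def by blast
      then show False using sI(4) by simp
    qed
    have "fst (dss ! 0 ! kb) = a"
      using sd_last[OF sdi[OF x0(2)]] x0 unfolding a_def kb_def k_def by simp
    then have fpb: "fst (dss ! s ! js) = a - 1" using pb by (simp add: nu_def)
    have fs: "fst (xs ! s) = a - 1" using sd_last[OF sdi[OF sI(1)]] jsl fpb by simp
    obtain r jr where t0: "\<tau> (0, 0) = (r, jr)" by (metis prod.collapse)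
    have rI: "r < n" "jr < length (dss ! r)" and pt: "dss ! 0 ! 0 = nu (dss ! r ! jr)"
      using row0[OF kpos] t0 ln unfolding index_set_def by auto
    have "snd (dss ! 0 ! 0) = c" using sd_hd[OF sdi[OF x0(2)]] x0 unfolding c_def by simp
    then have spt: "snd (dss ! r ! jr) = c - 1" using pt by (simp add: nu_def)
    have sr: "c - 1 \<le> snd (xs ! r)" using sd_ends[OF sdi[OF rI(1)] rI(2)] spt by simp
    have s_le_r: "s \<le> r"
    proof (cases "kb = 0")
      case True then show ?thesis using tb t0 by simp
    next
      case False
      have "fst (\<tau> (0, kb)) < fst (\<tau> (0, 0))"
        using rtau_dec[OF rt _ _] False kbk x0(2) ln unfolding k_def by simp
      then show ?thesis using tb t0 by simp
    qed
    have "snd (xs ! r) \<le> snd (xs ! s)"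
    proof (cases "s = r")
      case False
      then have "s < r" using s_le_r by simp
      then show ?thesis using srt rI(1) unfolding n_def sorted_wrt_iff_nth_less by blast
    qed simp
    then have ss1: "c - 1 \<le> snd (xs ! s)" using sr by simp
    have xsm: "xs ! s \<in># m" using sI(1) setx unfolding n_def by (metis nth_mem)
    have ss2: "snd (xs ! s) \<le> c" using leall xsm unfolding c_def by blast
    have "snd (xs ! s) \<noteq> c"
    proof
      assume "snd (xs ! s) = c"
      then have "a \<le> fst (xs ! s)" using minfst xsm unfolding a_def c_def by blast
      then show False using fs by simp
    qed
    then have "snd (xs ! s) = c - 1" using ss1 ss2 by simp
    then have xss: "xs ! s = nu_inv \<Delta>0" using fs unfolding nu_inv_def a_def c_def by (simp add: prod_eq_iff)
    then have Dsm: "nu_inv \<Delta>0 \<in># m" using xsm by simp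
    obtain A T where xsA: "xs = \<Delta>0 # A @ nu_inv \<Delta>0 # T"
      and co2: "canonical_order (m - {#\<Delta>0, nu_inv \<Delta>0#}) = A @ T"
      and Tl: "\<forall>\<Delta>\<in>set T. snd \<Delta> < snd \<Delta>0 - 1"
      using rm[OF Dsm] unfolding xs_def by blast
    have nA: "n = length A + length T + 2" using xsA unfolding n_def by simp
    have "xs ! Suc (length A) = nu_inv \<Delta>0" using xsA by (simp add: nth_append)
    then have eqs: "xs ! s = xs ! Suc (length A)" using xss by simp
    have bA: "Suc (length A) < length xs" using xsA by simp
    have sA: "s = Suc (length A)" using nth_eq_iff_index_eq[OF dist, of s "Suc (length A)"] sI(1) bA eqs
      unfolding n_def by simp
    have "r = s"
    proof (rule ccontr)
      assume "r \<noteq> s"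
      then have rs: "s < r" using s_le_r by simp
      define q where "q = r - Suc (Suc (length A))"
      have rq: "r = Suc (length A + Suc q)" unfolding q_def using rs sA by arith
      have "r - Suc (Suc (length A)) = q" unfolding q_def ..
      moreover have "xs ! r = T ! q" using xsA rq nth_append_length_plus[of A "nu_inv \<Delta>0 # T" "Suc q"] by simp
      ultimately have "xs ! r = T ! (r - Suc (Suc (length A)))" by simp
      moreover have "r - Suc (Suc (length A)) < length T" using rI(1) nA rs sA by simp
      ultimately have "xs ! r \<in> set T" by simp
      then have "snd (xs ! r) < c - 1" using Tl unfolding c_def by blast
      then show False using sr by simp
    qed
    have kb0: "kb = 0"
    proof (rule ccontr)
      assume "kb \<noteq> 0"
      have "fst (\<tau> (0, kb)) < fst (\<tau> (0, 0))"
        using rtau_dec[OF rt _ _] \<open>kb \<noteq> 0\<close> kbk x0(2) ln unfolding k_def by simp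
      then show False using tb t0 \<open>r = s\<close> by simp
    qed
    have k1: "length (dss ! 0) = 1" using kb0 kpos unfolding kb_def k_def by linarith
    have t00: "\<tau> (0, 0) = (s, js)" using tb kb0 by simp
    then have jrs: "jr = js" using t0 by simp
    have js0: "js = 0"
    proof (rule ccontr)
      assume "js \<noteq> 0"
      then have "snd (dss ! s ! js) < snd (xs ! s)" using sd_ends[OF sdi[OF sI(1)] sI(2)] by simp
      then show False using spt \<open>r = s\<close> jrs \<open>snd (xs ! s) = c - 1\<close> by simp
    qed
    have "length (dss ! s) = Suc js" using jsl sI(2) by arith
    then have ls: "length (dss ! Suc (length A)) = 1" using js0 sA by simp
    have dec': "decomposition (\<Delta>0 # A @ nu_inv \<Delta>0 # T) dss" using dec xsA by simp
    have t0': "\<tau> (0, 0) = (Suc (length A), 0)" using t00 js0 sA by simp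
    obtain dss2 where rel2: "relevant (A @ T) dss2" and trv: "trivial_decomp dss2 \<longrightarrow> trivial_decomp dss"
      using restrict[OF dec' rt k1 ls t0'] by blast
    define m2 where "m2 = m - {#\<Delta>0, nu_inv \<Delta>0#}"
    have neq: "\<Delta>0 \<noteq> nu_inv \<Delta>0" by (simp add: nu_inv_def prod_eq_iff)
    have sub: "{#\<Delta>0, nu_inv \<Delta>0#} \<subseteq># m" using D0m Dsm neq
      by (simp add: insert_subset_eq_iff in_diff_count)
    have sz: "size m2 < size m" unfolding m2_def using size_Diff_submset[OF sub] size_mset_mono[OF sub] by simp
    have cnt2: "\<forall>\<Delta>. count m2 \<Delta> \<le> 1"
    proof
      fix \<Delta> show "count m2 \<Delta> \<le> 1" using less.prems(1)[rule_format, of \<Delta>] unfolding m2_def by simp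
    qed
    have IH: "trivial_decomp dss2 \<and> speh_type m2"
      using less.hyps[OF sz cnt2] rel2 co2 unfolding m2_def by simp
    have sp: "speh_type m"
    proof -
      obtain N where N: "m2 = N + image_mset nu N" using IH unfolding speh_type_def by blast
      have "m = m2 + {#\<Delta>0, nu_inv \<Delta>0#}" unfolding m2_def by (rule subset_mset.diff_add[OF sub, symmetric])
      also have "\<dots> = add_mset (nu_inv \<Delta>0) N + image_mset nu (add_mset (nu_inv \<Delta>0) N)"
        unfolding N by (simp add: nu_def nu_inv_def)
      finally show ?thesis unfolding speh_type_def by blast
    qed
    show ?thesis using IH trv sp by simp
  qed
qed

theorem mainTheorem10:
  fixes m :: "seg multiset"
  assumes "is_segms m"
    and "\<forall>\<Delta>. count m \<Delta> \<le> 1"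
  shows "(\<forall>dss. decomposition (canonical_order m) dss \<and> \<not> trivial_decomp dss
            \<longrightarrow> \<not> relevant (canonical_order m) dss)
         \<and> (distinguished m \<longrightarrow> speh_type m)"
proof (intro conjI allI impI)
  fix dss assume "decomposition (canonical_order m) dss \<and> \<not> trivial_decomp dss"
  then show "\<not> relevant (canonical_order m) dss" using main_lemma[OF assms(2)] by blast
next
  assume d: "distinguished m"
  have std: "standard_ordering m (canonical_order m)"
    unfolding standard_ordering_def
  proof (intro conjI allI impI)
    show "mset (canonical_order m) = m" using canon_basic by blast
    fix i j assume ij: "i < j \<and> j < length (canonical_order m)"
    then have "snd (canonical_order m ! j) \<le> snd (canonical_order m ! i)"
      using canon_basic[of m] unfolding sorted_wrt_iff_nth_less by blast
    then show "\<not> seg_prec (canonical_order m ! i) (canonical_order m ! j)"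
      unfolding seg_prec_def by simp
  qed
  then obtain dss where "relevant (canonical_order m) dss" using d unfolding distinguished_def by blast
  then show "speh_type m" using main_lemma[OF assms(2)] by blast
qed

end
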